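(* Let $N\ge1$, $B>0$, $a_{\max}>0$, and for each $n$ let $a_n\ge0$, $\zeta_n\in(0,1]$, $\beta_n\ge0$, integers $\tau_n\ge1$, $D_n\ge1$, and $0\le q_n<p_n\le1$ with $q_n\le a_n/a_{\max}\le p_n$. Put $\tilde a_n=\frac{a_n-a_{\max}q_n}{p_n-q_n}$. For $\lambda\ge0$ and $n$ with $\zeta_n\beta_n>\lambda$, let $c_n(\lambda)=\frac{\lambda}{(\zeta_n\beta_n-\lambda)(1-\zeta_n)^{\tau_n}+\lambda}$ and $$v_n(\lambda)=\begin{cases} p_n\frac{1-(1-\zeta_n)^{\tau_n}}{\zeta_n}(\zeta_n\beta_n-\lambda), & p_n\le c_n(\lambda),\\[2pt] -(1-p_n)\frac{1-(1-\zeta_n)^{D_n}}{\zeta_n}\lambda+p_n\frac{1-(1-\zeta_n)^{\tau_n+D_n}}{\zeta_n}(\zeta_n\beta_n-\lambda), & p_n>c_n(\lambda).\end{cases}$$ Define $$g_I(\lambda)=\lambda B+\sum_{n:\ \zeta_n\beta_n>\lambda}\Big[\tilde a_n v_n(\lambda)+(a_{\max}-\tilde a_n)q_n\frac{1-(1-\zeta_n)^{\tau_n}}{\zeta_n}(\zeta_n\beta_n-\lambda)\Big],$$ $$g_0(\lambda)=\lambda B+\sum_{n:\ \zeta_n\beta_n>\lambda}a_n\frac{1-(1-\zeta_n)^{\tau_n}}{\zeta_n}(\zeta_n\beta_n-\lambda).$$ Let $\phi_I^*=\min_{\lambda\ge0}g_I(\lambda)$, $\phi_0^*=\min_{\lambda\ge0}g_0(\lambda)$,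 $\lambda_0^*$ a minimizer of $g_0$, and $\lambda_I^*$ a minimizer of $g_I$ over $\lambda\ge0$. Then $$\phi_I^*-\phi_0^*\le\sum_{n:\ \zeta_n\beta_n>\lambda_0^*}\Big\{\tilde a_n v_n(\lambda_0^* )-\frac{(a_np_n-a_{\max}p_nq_n)[1-(1-\zeta_n)^{\tau_n}]}{(p_n-q_n)\zeta_n}(\zeta_n\beta_n-\lambda_0^* )\Big\}$$ and $$\phi_I^*-\phi_0^*\ge\sum_{n:\ \zeta_n\beta_n>\lambda_I^*}\Big\{\tilde a_n v_n(\lambda_I^* )-\frac{(a_np_n-a_{\max}p_nq_n)[1-(1-\zeta_n)^{\tau_n}]}{(p_n-q_n)\zeta_n}(\zeta_n\beta_n-\lambda_I^* )\Big\}.$$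
   Context: Static channels, binary resource levels. $a_n$ is the arrival rate of user $n$, $a_{\max}$ the maximal number of possible arrivals per slot, $p_n$ the true-positive rate and $q_n$ the false-negative rate of prediction, $\tilde a_n$ the rate of predicted arrivals, $\zeta_n$ the success probability, $\beta_n$ the weight, $\tau_n$ the deadline, $D_n$ the prediction window, $B$ the resource budget. $g_I$ and $g_0$ are the Lagrange dual functions with imperfect prediction and with no prediction; $\phi_I^*,\phi_0^*$ the corresponding optimal weighted timely-throughputs. *)

theory Defs
  imports "HOL-Analysis.Analysis"
begin

definition atil :: "real \<Rightarrow> real \<Rightarrow> real \<Rightarrow> real \<Rightarrow> real" where
  "atil amax a p q = (a - amax * q) / (p - q)"

definition cfun :: "real \<Rightarrow> real \<Rightarrow> nat \<Rightarrow> real \<Rightarrow> real" where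
  "cfun \<zeta> \<beta> \<tau> l = l / ((\<zeta> * \<beta> - l) * (1 - \<zeta>) ^ \<tau> + l)"

definition vfun :: "real \<Rightarrow> real \<Rightarrow> real \<Rightarrow> nat \<Rightarrow> nat \<Rightarrow> real \<Rightarrow> real" where
  "vfun p \<zeta> \<beta> \<tau> D l =
     (if p \<le> cfun \<zeta> \<beta> \<tau> l
      then p * ((1 - (1 - \<zeta>) ^ \<tau>) / \<zeta>) * (\<zeta> * \<beta> - l)
      else - (1 - p) * ((1 - (1 - \<zeta>) ^ D) / \<zeta>) * l
           + p * ((1 - (1 - \<zeta>) ^ (\<tau> + D)) / \<zeta>) * (\<zeta> * \<beta> - l))"

definition gI :: "nat \<Rightarrow> real \<Rightarrow> real \<Rightarrow> (nat \<Rightarrow> real) \<Rightarrow> (nat \<Rightarrow> real) \<Rightarrow> (nat \<Rightarrow> real)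
   \<Rightarrow> (nat \<Rightarrow> real) \<Rightarrow> (nat \<Rightarrow> real) \<Rightarrow> (nat \<Rightarrow> nat) \<Rightarrow> (nat \<Rightarrow> nat) \<Rightarrow> real \<Rightarrow> real" where
  "gI N B amax a p q \<zeta> \<beta> \<tau> D l = l * B +
     (\<Sum>n\<in>{n. n < N \<and> \<zeta> n * \<beta> n > l}.
        atil amax (a n) (p n) (q n) * vfun (p n) (\<zeta> n) (\<beta> n) (\<tau> n) (D n) l
        + (amax - atil amax (a n) (p n) (q n)) * q n * ((1 - (1 - \<zeta> n) ^ \<tau> n) / \<zeta> n)
            * (\<zeta> n * \<beta> n - l))"

definition g0 :: "nat \<Rightarrow> real \<Rightarrow> (nat \<Rightarrow> real) \<Rightarrow> (nat \<Rightarrow> real) \<Rightarrow> (nat \<Rightarrow> real)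
   \<Rightarrow> (nat \<Rightarrow> nat) \<Rightarrow> real \<Rightarrow> real" where
  "g0 N B a \<zeta> \<beta> \<tau> l = l * B +
     (\<Sum>n\<in>{n. n < N \<and> \<zeta> n * \<beta> n > l}.
        a n * ((1 - (1 - \<zeta> n) ^ \<tau> n) / \<zeta> n) * (\<zeta> n * \<beta> n - l))"

definition gapterm :: "nat \<Rightarrow> real \<Rightarrow> (nat \<Rightarrow> real) \<Rightarrow> (nat \<Rightarrow> real) \<Rightarrow> (nat \<Rightarrow> real)
   \<Rightarrow> (nat \<Rightarrow> real) \<Rightarrow> (nat \<Rightarrow> real) \<Rightarrow> (nat \<Rightarrow> nat) \<Rightarrow> (nat \<Rightarrow> nat) \<Rightarrow> real \<Rightarrow> real" where
  "gapterm N amax a p q \<zeta> \<beta> \<tau> D l =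
     (\<Sum>n\<in>{n. n < N \<and> \<zeta> n * \<beta> n > l}.
        atil amax (a n) (p n) (q n) * vfun (p n) (\<zeta> n) (\<beta> n) (\<tau> n) (D n) l
        - ((a n * p n - amax * p n * q n) * (1 - (1 - \<zeta> n) ^ \<tau> n))
            / ((p n - q n) * \<zeta> n) * (\<zeta> n * \<beta> n - l))"

end

theory Submission
  imports Defs
begin

lemma diff_eq:
  assumes "\<And>n. n < N \<Longrightarrow> q n < p n"
  shows "gI N B amax a p q \<zeta> \<beta> \<tau> D l - g0 N B a \<zeta> \<beta> \<tau> l = gapterm N amax a p q \<zeta> \<beta> \<tau> D l"
proof -
  have "\<And>n. n \<in> {n. n < N \<and> \<zeta> n * \<beta> n > l} \<Longrightarrow>
        (atil amax (a n) (p n) (q n) * vfun (p n) (\<zeta> n) (\<beta> n) (\<tau> n) (D n) l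
        + (amax - atil amax (a n) (p n) (q n)) * q n * ((1 - (1 - \<zeta> n) ^ \<tau> n) / \<zeta> n)
            * (\<zeta> n * \<beta> n - l))
       - a n * ((1 - (1 - \<zeta> n) ^ \<tau> n) / \<zeta> n) * (\<zeta> n * \<beta> n - l)
      = atil amax (a n) (p n) (q n) * vfun (p n) (\<zeta> n) (\<beta> n) (\<tau> n) (D n) l
        - ((a n * p n - amax * p n * q n) * (1 - (1 - \<zeta> n) ^ \<tau> n))
            / ((p n - q n) * \<zeta> n) * (\<zeta> n * \<beta> n - l)"
  proof -
    fix n assume "n \<in> {n. n < N \<and> \<zeta> n * \<beta> n > l}"
    hence pq: "p n - q n \<noteq> 0" using assms by force
    have e: "(amax - atil amax (a n) (p n) (q n)) * q n - a n = - (a n * p n - amax * p n * q n) / (p n - q n)"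
      unfolding atil_def using pq by (simp add: field_simps)
    have "(amax - atil amax (a n) (p n) (q n)) * q n * ((1 - (1 - \<zeta> n) ^ \<tau> n) / \<zeta> n) * (\<zeta> n * \<beta> n - l)
       - a n * ((1 - (1 - \<zeta> n) ^ \<tau> n) / \<zeta> n) * (\<zeta> n * \<beta> n - l)
       = ((amax - atil amax (a n) (p n) (q n)) * q n - a n) * ((1 - (1 - \<zeta> n) ^ \<tau> n) / \<zeta> n) * (\<zeta> n * \<beta> n - l)"
      by (simp add: algebra_simps)
    also have "... = - ((a n * p n - amax * p n * q n) * (1 - (1 - \<zeta> n) ^ \<tau> n))
            / ((p n - q n) * \<zeta> n) * (\<zeta> n * \<beta> n - l)" unfolding e by (simp add: divide_simps algebra_simps)
    finally show "?thesis n" by simp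
  qed
  note h = this
  show ?thesis unfolding gI_def g0_def gapterm_def
    apply (simp only: add_diff_cancel_left sum_subtractf[symmetric] add_diff_add)
    apply (rule sum.cong, rule refl)
    using h by (simp add: algebra_simps)
qed

theorem theorem4:
  fixes N :: nat and B amax :: real
    and a p q \<zeta> \<beta> :: "nat \<Rightarrow> real" and \<tau> D :: "nat \<Rightarrow> nat"
    and lam0 lamI phiI phi0 :: real
  assumes "N \<ge> 1" and "B > 0" and "amax > 0"
    and "\<And>n. n < N \<Longrightarrow> a n \<ge> 0"
    and "\<And>n. n < N \<Longrightarrow> 0 < \<zeta> n \<and> \<zeta> n \<le> 1"
    and "\<And>n. n < N \<Longrightarrow> \<beta> n \<ge> 0"
    and "\<And>n. n < N \<Longrightarrow> \<tau> n \<ge> 1"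
    and "\<And>n. n < N \<Longrightarrow> D n \<ge> 1"
    and "\<And>n. n < N \<Longrightarrow> 0 \<le> q n \<and> q n < p n \<and> p n \<le> 1"
    and "\<And>n. n < N \<Longrightarrow> q n \<le> a n / amax \<and> a n / amax \<le> p n"
    and "lam0 \<ge> 0" and "\<forall>l\<ge>0. g0 N B a \<zeta> \<beta> \<tau> lam0 \<le> g0 N B a \<zeta> \<beta> \<tau> l"
    and "lamI \<ge> 0" and "\<forall>l\<ge>0. gI N B amax a p q \<zeta> \<beta> \<tau> D lamI \<le> gI N B amax a p q \<zeta> \<beta> \<tau> D l"
    and "phi0 = g0 N B a \<zeta> \<beta> \<tau> lam0"
    and "phiI = gI N B amax a p q \<zeta> \<beta> \<tau> D lamI"
  shows "phiI - phi0 \<le> gapterm N amax a p q \<zeta> \<beta> \<tau> D lam0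
    \<and> phiI - phi0 \<ge> gapterm N amax a p q \<zeta> \<beta> \<tau> D lamI"
proof -
  have qp: "\<And>n. n < N \<Longrightarrow> q n < p n" using assms(9) by blast
  note d = diff_eq[where N=N and p=p and q=q and B=B and amax=amax and a=a and \<zeta>=\<zeta> and \<beta>=\<beta> and \<tau>=\<tau> and D=D, OF qp]
  have A: "gI N B amax a p q \<zeta> \<beta> \<tau> D lamI \<le> gI N B amax a p q \<zeta> \<beta> \<tau> D lam0"
    using assms(11,14) by blast
  have C: "g0 N B a \<zeta> \<beta> \<tau> lam0 \<le> g0 N B a \<zeta> \<beta> \<tau> lamI"
    using assms(12,13) by blast
  note d0 = d[where l=lam0] and d1 = d[where l=lamI]
  show ?thesis unfolding assms(15,16) using A C d0 d1 by linarith
qed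

end
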